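(* Let $(A,\times)$ be a (left) Leibniz dual algebra over a field, i.e. $(a\times b)\times c=a\times(b\times c+c\times b)$ for all $a,b,c\in A$. Then $A$ satisfies the (right) Tortken identity $$(a\times b)\times(c\times d)-(a\times d)\times(c\times b)=(a,b,c)\times d-(a,d,c)\times b\quad\text{for all }a,b,c,d\in A.$$
   Context: The associator is $(a,b,c)=a\times(b\times c)-(a\times b)\times c$. *)

theory Defs
  imports Main "HOL.Vector_Spaces"
begin

definition algebra_over :: "('k::field \<Rightarrow> 'v::ab_group_add \<Rightarrow> 'v) \<Rightarrow> ('v \<Rightarrow> 'v \<Rightarrow> 'v) \<Rightarrow> bool" where
  "algebra_over scale mult \<longleftrightarrow>
     vector_space scale \<and>
     (\<forall>x y z. mult (x + y) z = mult x z + mult y z) \<and>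
     (\<forall>x y z. mult x (y + z) = mult x y + mult x z) \<and>
     (\<forall>c x y. mult (scale c x) y = scale c (mult x y)) \<and>
     (\<forall>c x y. mult x (scale c y) = scale c (mult x y))"

definition associator :: "('v::ab_group_add \<Rightarrow> 'v \<Rightarrow> 'v) \<Rightarrow> 'v \<Rightarrow> 'v \<Rightarrow> 'v \<Rightarrow> 'v" where
  "associator mult a b c = mult a (mult b c) - mult (mult a b) c"

definition left_leibniz_dual :: "('v::ab_group_add \<Rightarrow> 'v \<Rightarrow> 'v) \<Rightarrow> bool" where
  "left_leibniz_dual mult \<longleftrightarrow>
     (\<forall>a b c. mult (mult a b) c = mult a (mult b c + mult c b))"

end

theory Submission
  imports Defs
begin

theorem mainTheorem16:
  fixes scale :: "'k::field \<Rightarrow> 'v::ab_group_add \<Rightarrow> 'v"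
    and mult :: "'v \<Rightarrow> 'v \<Rightarrow> 'v"
  assumes "algebra_over scale mult"
    and "left_leibniz_dual mult"
  shows "\<forall>a b c d.
    mult (mult a b) (mult c d) - mult (mult a d) (mult c b)
      = mult (associator mult a b c) d - mult (associator mult a d c) b"
proof (intro allI)
  fix a b c d
  have R: "\<And>x y z. mult x (y + z) = mult x y + mult x z"
    and L: "\<And>x y z. mult (x + y) z = mult x z + mult y z"
    using assms(1) unfolding algebra_over_def by blast+
  have Rm: "\<And>x y z. mult x (y - z) = mult x y - mult x z"
    by (metis R add_diff_cancel eq_diff_eq)
  have Lm: "\<And>x y z. mult (x - y) z = mult x z - mult y z"
    by (metis L add_diff_cancel eq_diff_eq)
  have D: "\<And>x y z. mult (mult x y) z = mult x (mult y z) + mult x (mult z y)"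
    using assms(2) R unfolding left_leibniz_dual_def by metis
  have A: "\<And>x y z. associator mult x y z = - mult x (mult z y)"
    unfolding associator_def using D by simp
  have N: "\<And>x z. mult (- x) z = - mult x z"
    by (metis Lm diff_0 diff_self)
  show "mult (mult a b) (mult c d) - mult (mult a d) (mult c b)
      = mult (associator mult a b c) d - mult (associator mult a d c) b"
    unfolding A N D by (simp add: algebra_simps)
qed

end
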